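(* Let $T=[(\texttt{@}\texttt{\$},1),(\sigma_1,p_1),\dots,(\sigma_{k-1},p_{k-1})]$ be a sequence of pairs with $k\ge2$, each $\sigma_d$ ($d\ge1$) a non-empty string over $\Sigma$ and each $p_d$ a non-negative integer. For $1\le d\le k-2$ write $a_d=\sigma_d[1]$ and $c_d=\sigma_d[|\sigma_d|]$. Then $T=\mathcal{F}(s)$ for some $s\in\Sigma^*$ if and only if: (1) for each $1\le d\le k-2$: $p_d\ge1$ and $|\sigma_d|-p_d\ge1$, the front $\sigma_d[1..p_d]$ is a single run of $a_d$, and the back $\sigma_d[p_d+1..|\sigma_d|]$ is a single run of $c_d$; (2) $p_{k-1}=0$ and $\sigma_{k-1}$ is either a single run $a^m$ or two adjacent runs $a^\ell c^b$ with $a\ne c$; (3) if $k\ge3$: for $1\le d\le k-3$, $a_{d+1}\ne a_d$ and $c_{d+1}\ne c_d$; and the first character of $\sigma_{k-1}$ differs from $a_{k-2}$ and the last character of $\sigma_{k-1}$ differs from $c_{k-2}$. (When $k=2$ only (1) and (2) apply.) Moreover, $\mathcal{F}(\mathcal{F}^{-1}(T))=T$ for every $T$ satisfying these conditions.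
   Context: Let $\Sigma$ be an alphabet and $\texttt{@},\texttt{\$}$ two distinct symbols not in $\Sigma$. For $s\in\Sigma^*$ with $|s|=n$ let $\hat s=\texttt{@}\,s\,\texttt{\$}$ (positions $1,\dots,n+2$); $\hat s[i..j)$ is the substring at positions $i,\dots,j-1$. A single run of $a$ is a string $a^m$, $m\ge1$. The leading (trailing) run of a non-empty string is its longest prefix (suffix) consisting of one repeated symbol. The Flashback decomposition $\mathcal{F}(s)$ is the sequence of tokens $(\sigma,p)$ produced as follows, starting from active span $[lo,hi)=[1,n+3)$: if $lo\ge hi$, stop. Let $\ell$ be the leading-run length of $\hat s[lo..hi)$. If $\ell=hi-lo$, append $(\hat s[lo..hi),0)$ and stop. Otherwise let $\hat s[r..hi)$ be the trailing run of $\hat s[lo..hi)$ and $\sigma=\hat s[lo..lo+\ell)\cdot\hat s[r..hi)$; if $lo+\ell\ge r$, append $(\sigma,0)$ and stop; otherwise append $(\sigma,\ell)$ and repeat with $[lo+\ell,r)$. For $T=[(\sigma_0,p_0),\dots,(\sigma_{k-1},p_{k-1})]$ define $N_{k-1}=\sigma_{k-1}$ and $N_i=\sigma_i[1..p_i]\cdot N_{i+1}\cdot\sigma_i[p_i+1..|\sigma_i|]$ for $i<k-1$; $\mathcal{F}^{-1}(T)$ is $N_0$ with its first and last characters removed. *)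

theory Defs
  imports Main
begin

datatype 'a sym = At | Dollar | Ch 'a

definition lead_len :: "'b list \<Rightarrow> nat" where
  "lead_len w = length (takeWhile (\<lambda>x. x = hd w) w)"

definition trail_len :: "'b list \<Rightarrow> nat" where
  "trail_len w = lead_len (rev w)"

lemma lead_len_pos: "w \<noteq> [] \<Longrightarrow> lead_len w \<ge> 1"
  by (cases w) (auto simp: lead_len_def)

text \<open>The Flashback process run on an active span w = s-hat[lo..hi).\<close>
function flash :: "'b list \<Rightarrow> ('b list \<times> nat) list" where
  "flash w =
    (if w = [] then []
     else let l = lead_len w in
       if l = length w then [(w, 0)]
       else let r = length w - trail_len w; \<sigma> = take l w @ drop r w in
         if l \<ge> r then [(\<sigma>, 0)]
         else (\<sigma>, l) # flash (drop l (take r w)))"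
  by pat_completeness auto
termination
proof (relation "measure length")
  fix w :: "'b list" and l r
  assume "w \<noteq> []" "l = lead_len w" "r = length w - trail_len w" "\<not> r \<le> l"
  then show "(drop l (take r w), w) \<in> measure length"
    using lead_len_pos[of w] by auto
qed simp

definition hat :: "'a list \<Rightarrow> 'a sym list" where
  "hat s = At # map Ch s @ [Dollar]"

definition Flashback :: "'a list \<Rightarrow> ('a sym list \<times> nat) list" where
  "Flashback s = flash (hat s)"

fun nest :: "('b list \<times> nat) list \<Rightarrow> 'b list" where
  "nest [] = []"
| "nest [(\<sigma>, p)] = \<sigma>"
| "nest ((\<sigma>, p) # rest) = take p \<sigma> @ nest rest @ drop p \<sigma>"

definition Flashback_inv :: "('b list \<times> nat) list \<Rightarrow> 'b list" where
  "Flashback_inv T = butlast (tl (nest T))"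

definition single_run :: "'b \<Rightarrow> 'b list \<Rightarrow> bool" where
  "single_run a x \<longleftrightarrow> x \<noteq> [] \<and> (\<forall>y\<in>set x. y = a)"

end

theory Submission
  imports Defs
begin

declare flash.simps[simp del]


lemma lead_len_rep:
  assumes "n \<ge> 1" "u = [] \<or> hd u \<noteq> a"
  shows "lead_len (replicate n a @ u) = n"
proof -
  have h: "hd (replicate n a @ u) = a" using assms(1) by (cases n) auto
  have "takeWhile (\<lambda>x. x = a) u = []" using assms(2) by (cases u) auto
  moreover have "takeWhile (\<lambda>x. x = a) (replicate n a @ u) = replicate n a @ takeWhile (\<lambda>x. x = a) u"
    by (rule takeWhile_append2) simp
  ultimately show ?thesis unfolding lead_len_def h by simp
qed

lemma trail_len_rep:
  assumes "n \<ge> 1" "u = [] \<or> last u \<noteq> a"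
  shows "trail_len (u @ replicate n a) = n"
proof -
  have "rev u = [] \<or> hd (rev u) \<noteq> a" using assms(2) by (auto simp: hd_rev)
  then show ?thesis unfolding trail_len_def using lead_len_rep[OF assms(1), of "rev u" a] by simp
qed

lemma lead_decomp:
  assumes "w \<noteq> []"
  shows "w = replicate (lead_len w) (hd w) @ drop (lead_len w) w"
    and "drop (lead_len w) w = [] \<or> hd (drop (lead_len w) w) \<noteq> hd w"
    and "lead_len w \<ge> 1"
    and "lead_len w \<le> length w"
    and "take (lead_len w) w = replicate (lead_len w) (hd w)"
proof -
  let ?P = "\<lambda>x. x = hd w"
  define l where "l = lead_len w"
  have l: "l = length (takeWhile ?P w)" unfolding l_def lead_len_def ..
  have tw: "takeWhile ?P w = take l w" unfolding l by (rule takeWhile_eq_take)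
  have dw: "dropWhile ?P w = drop l w" unfolding l by (rule dropWhile_eq_drop)
  have le: "l \<le> length w" unfolding l by (rule length_takeWhile_le)
  have all: "\<forall>x\<in>set (take l w). x = hd w" unfolding tw[symmetric] by (blast dest: set_takeWhileD)
  have rep: "take l w = replicate l (hd w)"
  proof -
    have "take l w = replicate (length (take l w)) (hd w)"
      using replicate_length_same[OF all] by (rule sym)
    then show ?thesis using le by (simp add: min_def)
  qed
  show "take (lead_len w) w = replicate (lead_len w) (hd w)" using rep unfolding l_def .
  have "w = take l w @ drop l w" by simp
  from this[unfolded rep] show "w = replicate (lead_len w) (hd w) @ drop (lead_len w) w"
    unfolding l_def .
  show "drop (lead_len w) w = [] \<or> hd (drop (lead_len w) w) \<noteq> hd w"
    using hd_dropWhile[of ?P w] unfolding dw l_def by blast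
  show "lead_len w \<ge> 1" using lead_len_pos[OF assms] .
  show "lead_len w \<le> length w" using le unfolding l_def .
qed

lemma trail_decomp:
  assumes "w \<noteq> []"
  shows "w = take (length w - trail_len w) w @ replicate (trail_len w) (last w)"
    and "take (length w - trail_len w) w = [] \<or> last (take (length w - trail_len w) w) \<noteq> last w"
    and "trail_len w \<ge> 1"
    and "trail_len w \<le> length w"
    and "drop (length w - trail_len w) w = replicate (trail_len w) (last w)"
proof -
  have r: "rev w \<noteq> []" using assms by simp
  let ?t = "trail_len w"
  let ?k = "length w - ?t"
  have t: "lead_len (rev w) = ?t" by (simp add: trail_len_def)
  have hd: "hd (rev w) = last w" by (simp add: hd_rev)
  have L2: "drop ?t (rev w) = [] \<or> hd (drop ?t (rev w)) \<noteq> last w"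
    using lead_decomp(2)[OF r] unfolding t hd .
  have L5: "take ?t (rev w) = replicate ?t (last w)"
    using lead_decomp(5)[OF r] unfolding t hd .
  have t4: "?t \<le> length w" using lead_decomp(4)[OF r] unfolding t by simp
  show "?t \<ge> 1" using lead_decomp(3)[OF r] unfolding t .
  show "?t \<le> length w" by (rule t4)
  have "rev (drop ?k w) = replicate ?t (last w)" using L5 t4 by (simp add: rev_drop)
  from arg_cong[where f=rev, OF this] show dr: "drop ?k w = replicate ?t (last w)" by simp
  have "w = take ?k w @ drop ?k w" by simp
  from this[unfolded dr] show "w = take ?k w @ replicate ?t (last w)" .
  have e: "drop ?t (rev w) = rev (take ?k w)" using t4 by (simp add: rev_take)
  show "take ?k w = [] \<or> last (take ?k w) \<noteq> last w"
    using L2 unfolding e by (simp add: hd_rev)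
qed

fun step :: "('b list \<times> nat) \<Rightarrow> ('b list \<times> nat) \<Rightarrow> bool" where
  "step (\<sigma>, p) (\<sigma>', p') = (p \<ge> 1 \<and> length \<sigma> - p \<ge> 1 \<and> single_run (hd \<sigma>) (take p \<sigma>) \<and>
     single_run (last \<sigma>) (drop p \<sigma>) \<and> hd \<sigma>' \<noteq> hd \<sigma> \<and> last \<sigma>' \<noteq> last \<sigma>)"

fun last_ok :: "('b list \<times> nat) \<Rightarrow> bool" where
  "last_ok (\<sigma>, p) = (p = 0 \<and> ((\<exists>a. single_run a \<sigma>) \<or>
     (\<exists>a c x y. a \<noteq> c \<and> single_run a x \<and> single_run c y \<and> \<sigma> = x @ y)))"

fun valid :: "('b list \<times> nat) list \<Rightarrow> bool" where
  "valid [] = False"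
| "valid [t] = last_ok t"
| "valid (t # t' # rest) = (step t t' \<and> valid (t' # rest))"

lemma single_run_rep: "single_run a x \<longleftrightarrow> x \<noteq> [] \<and> x = replicate (length x) a"
  unfolding single_run_def by (metis in_set_replicate replicate_length_same)

lemma flash_unfold:
  assumes "w \<noteq> []"
  shows "flash w = (if lead_len w = length w then [(w, 0)]
         else if lead_len w \<ge> length w - trail_len w
           then [(take (lead_len w) w @ drop (length w - trail_len w) w, 0)]
         else (take (lead_len w) w @ drop (length w - trail_len w) w, lead_len w)
            # flash (drop (lead_len w) (take (length w - trail_len w) w)))"
  using assms by (simp add: flash.simps[of w] Let_def)

lemma flash_hd:
  assumes "w \<noteq> []"
  shows "flash w \<noteq> [] \<and> hd (fst (hd (flash w))) = hd w \<and> last (fst (hd (flash w))) = last w"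
proof -
  define l where "l = lead_len w"
  define t where "t = trail_len w"
  define r where "r = length w - t"
  have e: "flash w = (if l = length w then [(w, 0)]
         else if l \<ge> r then [(take l w @ drop r w, 0)]
         else (take l w @ drop r w, l) # flash (drop l (take r w)))"
    using flash_unfold[OF assms] unfolding l_def r_def t_def .
  have d: "drop r w = replicate t (last w)" using trail_decomp(5)[OF assms] unfolding r_def t_def .
  have tk: "take l w = replicate l (hd w)" using lead_decomp(5)[OF assms] unfolding l_def .
  have l1: "l \<ge> 1" using lead_decomp(3)[OF assms] unfolding l_def .
  have t1: "t \<ge> 1" using trail_decomp(3)[OF assms] unfolding t_def .
  have "hd (take l w @ drop r w) = hd w" unfolding tk using l1 by (cases l) auto
  moreover have "last (take l w @ drop r w) = last w" unfolding d using t1 by (cases t) auto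
  ultimately show ?thesis using e by auto
qed

lemma valid_flash: "w \<noteq> [] \<Longrightarrow> valid (flash w)"
proof (induction w rule: flash.induct)
  case (1 w)
  define l where "l = lead_len w"
  define t where "t = trail_len w"
  define r where "r = length w - t"
  define a where "a = hd w"
  define c where "c = last w"
  have e: "flash w = (if l = length w then [(w, 0)]
         else if l \<ge> r then [(take l w @ drop r w, 0)]
         else (take l w @ drop r w, l) # flash (drop l (take r w)))"
    using flash_unfold[OF 1(2)] unfolding l_def r_def t_def .
  have d: "drop r w = replicate t c" using trail_decomp(5)[OF 1(2)] unfolding r_def t_def c_def .
  have tk: "take l w = replicate l a" using lead_decomp(5)[OF 1(2)] unfolding l_def a_def .
  have l1: "l \<ge> 1" using lead_decomp(3)[OF 1(2)] unfolding l_def .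
  have t1: "t \<ge> 1" using trail_decomp(3)[OF 1(2)] unfolding t_def .
  have l4: "l \<le> length w" using lead_decomp(4)[OF 1(2)] unfolding l_def .
  have t4: "t \<le> length w" using trail_decomp(4)[OF 1(2)] unfolding t_def .
  have L2: "drop l w = [] \<or> hd (drop l w) \<noteq> a" using lead_decomp(2)[OF 1(2)] unfolding l_def a_def .
  have T2: "take r w = [] \<or> last (take r w) \<noteq> c" using trail_decomp(2)[OF 1(2)] unfolding r_def t_def c_def .
  consider "l = length w" | "l \<noteq> length w" "l \<ge> r" | "l \<noteq> length w" "\<not> l \<ge> r" by blast
  then show ?case
  proof cases
    case 1
    have "w = take l w" using 1 by simp
    then have "w = replicate l a" unfolding tk .
    then have "single_run a w" using l1 by (simp add: single_run_rep)
    then show ?thesis using e 1 by auto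
  next
    case 2
    have "a \<noteq> c"
    proof
      assume ac: "a = c"
      have "drop l w = drop (l - r) (drop r w)" using 2 by simp
      also have "\<dots> = replicate (t - (l - r)) a" unfolding d ac by simp
      finally have dl: "drop l w = replicate (t - (l - r)) a" .
      have "drop l w \<noteq> []" using 2 l4 by simp
      then show False using dl L2 by (cases "t - (l - r)") auto
    qed
    moreover have "single_run a (take l w)" unfolding tk using l1 by (simp add: single_run_rep)
    moreover have "single_run c (drop r w)" unfolding d using t1 by (simp add: single_run_rep)
    ultimately have "last_ok (take l w @ drop r w, 0)" unfolding last_ok.simps by blast
    then show ?thesis using e 2 by simp
  next
    case 3
    define m where "m = drop l (take r w)"
    have lr: "l < r" "r \<le> length w" using 3 unfolding r_def by auto
    have lm: "length m = r - l" using lr unfolding m_def by simp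
    have mne: "m \<noteq> []" using lr lm by (cases m) auto
    have IH: "valid (flash m)"
      using 1(1)[OF 1(2) l_def 3(1) _ _ 3(2)[unfolded r_def t_def], folded t_def r_def, folded m_def] mne 3(2)
      unfolding m_def r_def t_def by simp
    obtain t' rest where fm: "flash m = t' # rest" using flash_hd[OF mne] by (cases "flash m") auto
    have h1: "hd (fst t') = hd m" and h2: "last (fst t') = last m" using flash_hd[OF mne] fm by auto
    have "m = take (r - l) (drop l w)" unfolding m_def by (simp add: drop_take)
    then have "hd m = hd (drop l w)" using lr by simp
    moreover have "drop l w \<noteq> []" using lr by simp
    ultimately have hm: "hd m \<noteq> a" using L2 by simp
    have "last m = last (take r w)" unfolding m_def using lr by simp
    moreover have "take r w \<noteq> []" using lr 1(2) by simp
    ultimately have lmc: "last m \<noteq> c" using T2 by simp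
    define \<sigma> where "\<sigma> = take l w @ drop r w"
    have sg: "\<sigma> = replicate l a @ replicate t c" unfolding \<sigma>_def tk d ..
    have ls: "length \<sigma> = l + t" unfolding sg by simp
    have ts: "take l \<sigma> = replicate l a" "drop l \<sigma> = replicate t c" unfolding sg by auto
    have hs: "hd \<sigma> = a" unfolding sg using l1 by (cases l) auto
    have lst: "last \<sigma> = c" unfolding sg using t1 by (cases t) auto
    have "step (\<sigma>, l) t'"
      using l1 t1 ls ts hs lst h1 h2 hm lmc by (cases t') (auto simp: single_run_rep)
    then show ?thesis using e 3 fm IH \<sigma>_def m_def by simp
  qed
qed

lemma flash_nest: "valid ts \<Longrightarrow> flash (nest ts) = ts \<and> nest ts \<noteq> [] \<and>
   hd (nest ts) = hd (fst (hd ts)) \<and> last (nest ts) = last (fst (hd ts))"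
proof (induction ts rule: valid.induct)
  case 1
  then show ?case by simp
next
  case (2 t)
  obtain \<sigma> p where t: "t = (\<sigma>, p)" by (cases t)
  have p0: "p = 0" using 2 t by simp
  have ne: "\<sigma> \<noteq> []" using 2 t by (auto simp: single_run_def)
  have "flash \<sigma> = [(\<sigma>, 0)]"
  proof (cases "\<exists>a. single_run a \<sigma>")
    case True
    then obtain a where "single_run a \<sigma>" by blast
    then have s: "\<sigma> = replicate (length \<sigma>) a @ []" by (simp add: single_run_rep)
    have "lead_len \<sigma> = length \<sigma>" using lead_len_rep[of "length \<sigma>" "[]" a] s ne
      by (metis One_nat_def Suc_leI length_greater_0_conv)
    then show ?thesis using ne by (simp add: flash.simps[of \<sigma>])
  next
    case False
    then obtain a c x y where h: "a \<noteq> c" "single_run a x" "single_run c y" "\<sigma> = x @ y"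
      using 2 t by auto
    have x: "x = replicate (length x) a" "x \<noteq> []" and y: "y = replicate (length y) c" "y \<noteq> []"
      using h by (auto simp: single_run_rep)
    have "hd y = c" using h(3) by (auto simp: single_run_def)
    then have "y = [] \<or> hd y \<noteq> a" using h(1) by simp
    then have l: "lead_len \<sigma> = length x" using lead_len_rep[of "length x" y a] x h(4)
      by (metis One_nat_def Suc_leI length_greater_0_conv)
    have "last x = a" using h(2) by (auto simp: single_run_def)
    then have "x = [] \<or> last x \<noteq> c" using h(1) by simp
    then have tt: "trail_len \<sigma> = length y" using trail_len_rep[of "length y" x c] y h(4)
      by (metis One_nat_def Suc_leI length_greater_0_conv)
    have "flash (x @ y) = [(x @ y, 0)]" using l tt h(4) x y
      by (simp add: flash.simps[of "x @ y"] Let_def)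
    then show ?thesis using h(4) by simp
  qed
  then show ?case using t p0 ne by simp
next
  case (3 t t' rest)
  obtain \<sigma> p where t: "t = (\<sigma>, p)" by (cases t)
  obtain \<sigma>' p' where t': "t' = (\<sigma>', p')" by (cases t')
  have st: "step t t'" and v: "valid (t' # rest)" using 3 by auto
  note IH = 3(1)[OF v]
  define N where "N = nest (t' # rest)"
  define a where "a = hd \<sigma>"
  define c where "c = last \<sigma>"
  define q where "q = length \<sigma> - p"
  have hN: "N \<noteq> []" "hd N \<noteq> a" "last N \<noteq> c" "flash N = t' # rest"
    using IH st t t' unfolding N_def a_def c_def by auto
  have S: "p \<ge> 1" "q \<ge> 1" "take p \<sigma> = replicate p a" "drop p \<sigma> = replicate q c"
    using st t t' unfolding a_def c_def q_def by (auto simp: single_run_rep)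
  have nest: "nest (t # t' # rest) = replicate p a @ N @ replicate q c"
    using S t unfolding N_def by simp
  define w where "w = replicate p a @ N @ replicate q c"
  have lw: "length w = p + length N + q" unfolding w_def by simp
  have l: "lead_len w = p" unfolding w_def
    using lead_len_rep[of p "N @ replicate q c" a] S hN by simp
  have tr: "trail_len w = q" unfolding w_def
    using trail_len_rep[of q "replicate p a @ N" c] S hN by simp
  have tk: "take p w = replicate p a" unfolding w_def by simp
  have dr: "drop (p + length N) w = replicate q c" unfolding w_def by simp
  have mid: "drop p (take (p + length N) w) = N" unfolding w_def by simp
  have sig: "\<sigma> = replicate p a @ replicate q c" using S by (metis append_take_drop_id)
  have "flash w = (\<sigma>, p) # flash N"
    using hN lw l tr tk dr mid sig unfolding w_def
    by (simp add: flash.simps[of "replicate p a @ N @ replicate q c"] Let_def)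
  then have "flash (nest (t # t' # rest)) = t # t' # rest" using nest hN t w_def by simp
  moreover have "hd (nest (t # t' # rest)) = hd (fst (hd (t # t' # rest)))"
    using nest S t a_def by (cases p) auto
  moreover have "last (nest (t # t' # rest)) = last (fst (hd (t # t' # rest)))"
    using nest S t c_def by (cases q) auto
  ultimately show ?case using nest hN(1) by (simp del: flash.simps)
qed



lemma Flashback_nonempty:
  assumes "s \<noteq> []"
  shows "Flashback s = ([At, Dollar], 1) # flash (map Ch s)"
proof -
  define w where "w = replicate 1 At @ (map Ch s @ [Dollar])"
  have hw: "hat s = w" unfolding hat_def w_def by simp
  have "map Ch s @ [Dollar] = [] \<or> hd (map Ch s @ [Dollar]) \<noteq> At"
    using assms by (cases s) auto
  then have l: "lead_len w = 1" unfolding w_def by (rule lead_len_rep[rotated]) simp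
  have w2: "w = (At # map Ch s) @ replicate 1 Dollar" unfolding w_def by simp
  have "last (At # map Ch s) \<noteq> Dollar" using assms by (cases s rule: rev_cases) auto
  then have t: "trail_len w = 1" using trail_len_rep[of 1 "At # map Ch s" Dollar] w2 by simp
  have lw: "length w = length s + 2" unfolding w_def by simp
  have "flash w = ([At, Dollar], 1) # flash (drop 1 (take (length s + 1) w))"
  proof -
    have a: "take 1 w = [At]" "drop (length s + 1) w = [Dollar]" "w \<noteq> []" unfolding w_def by simp_all
    show ?thesis using l t lw assms a by (simp add: flash.simps[of w] Let_def)
  qed
  moreover have "drop 1 (take (length s + 1) w) = map Ch s" unfolding w_def by simp
  ultimately show ?thesis unfolding Flashback_def hw by (simp del: flash.simps)
qed

lemma Flashback_empty: "Flashback [] = [([At, Dollar], 0)]"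
proof -
  have l: "lead_len [At, Dollar] = 1" using lead_len_rep[of 1 "[Dollar]" At] by simp
  have t: "trail_len [At, Dollar] = 1" using trail_len_rep[of 1 "[At]" Dollar] by simp
  have "flash [At, Dollar] = [([At, Dollar], 0)]"
    by (simp only: flash.simps[of "[At, Dollar]"]) (simp add: l t Let_def del: flash.simps)
  then show ?thesis unfolding Flashback_def hat_def by simp
qed

lemma valid_index: "valid ts \<longleftrightarrow> ts \<noteq> [] \<and>
   (\<forall>i. Suc i < length ts \<longrightarrow> step (ts ! i) (ts ! Suc i)) \<and> last_ok (last ts)"
proof (induction ts rule: valid.induct)
  case 1 then show ?case by simp
next
  case (2 t) then show ?case by simp
next
  case (3 t t' rest)
  have "(\<forall>i. Suc i < length (t # t' # rest) \<longrightarrow> step ((t # t' # rest) ! i) ((t # t' # rest) ! Suc i))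
     \<longleftrightarrow> step t t' \<and> (\<forall>i. Suc i < length (t' # rest) \<longrightarrow> step ((t' # rest) ! i) ((t' # rest) ! Suc i))"
  proof
    assume H: "\<forall>i. Suc i < length (t # t' # rest) \<longrightarrow> step ((t # t' # rest) ! i) ((t # t' # rest) ! Suc i)"
    show "step t t' \<and> (\<forall>i. Suc i < length (t' # rest) \<longrightarrow> step ((t' # rest) ! i) ((t' # rest) ! Suc i))"
    proof (intro conjI allI impI)
      show "step t t'" using H[rule_format, of 0] by simp
      fix i assume "Suc i < length (t' # rest)"
      then show "step ((t' # rest) ! i) ((t' # rest) ! Suc i)" using H[rule_format, of "Suc i"] by simp
    qed
  next
    assume H: "step t t' \<and> (\<forall>i. Suc i < length (t' # rest) \<longrightarrow> step ((t' # rest) ! i) ((t' # rest) ! Suc i))"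
    show "\<forall>i. Suc i < length (t # t' # rest) \<longrightarrow> step ((t # t' # rest) ! i) ((t # t' # rest) ! Suc i)"
    proof (intro allI impI)
      fix i assume "Suc i < length (t # t' # rest)"
      then show "step ((t # t' # rest) ! i) ((t # t' # rest) ! Suc i)" using H
        by (cases i) auto
    qed
  qed
  then show ?case using 3 by simp
qed

lemma single_run_Ch: "single_run a (map Ch x) \<longleftrightarrow> x \<noteq> [] \<and> a = Ch (hd x) \<and> single_run (hd x) x"
  unfolding single_run_def by (cases x) auto

lemma single_run_Ch2: "single_run (Ch a) (map Ch x) \<longleftrightarrow> single_run a x"
  unfolding single_run_def by auto

lemma single_run_hd: "single_run a x \<Longrightarrow> a = hd x"
  by (cases x) (auto simp: single_run_def)

lemma step_Ch:
  assumes "x \<noteq> []" "y \<noteq> []"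
  shows "step (map Ch x, p) (map Ch y, q) \<longleftrightarrow>
     (p \<ge> 1 \<and> length x - p \<ge> 1 \<and> single_run (hd x) (take p x) \<and>
      single_run (last x) (drop p x) \<and> hd y \<noteq> hd x \<and> last y \<noteq> last x)"
  using assms by (simp add: hd_map last_map take_map drop_map single_run_Ch2)

lemma last_ok_Ch:
  assumes "x \<noteq> []"
  shows "last_ok (map Ch x, p) \<longleftrightarrow> p = 0 \<and> ((\<exists>a. single_run a x) \<or>
     (\<exists>a c u v. a \<noteq> c \<and> single_run a u \<and> single_run c v \<and> x = u @ v))"
proof -
  have 1: "(\<exists>a. single_run a (map Ch x)) \<longleftrightarrow> (\<exists>a. single_run a x)"
    using assms by (metis single_run_Ch single_run_hd)
  have 2: "(\<exists>a c u v. a \<noteq> c \<and> single_run a u \<and> single_run c v \<and> map Ch x = u @ v) \<longleftrightarrow>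
     (\<exists>a c u v. a \<noteq> c \<and> single_run a u \<and> single_run c v \<and> x = u @ v)"
  proof
    assume "\<exists>a c u v. a \<noteq> c \<and> single_run a u \<and> single_run c v \<and> map Ch x = u @ v"
    then obtain a c u v where h: "a \<noteq> c" "single_run a u" "single_run c v" "map Ch x = u @ v" by blast
    then obtain u' v' where uv: "x = u' @ v'" "u = map Ch u'" "v = map Ch v'"
      by (auto simp: map_eq_append_conv)
    then show "\<exists>a c u v. a \<noteq> c \<and> single_run a u \<and> single_run c v \<and> x = u @ v"
      using h by (auto simp: single_run_Ch)
  next
    assume "\<exists>a c u v. a \<noteq> c \<and> single_run a u \<and> single_run c v \<and> x = u @ v"
    then obtain a c u v where h: "a \<noteq> c" "single_run a u" "single_run c v" "x = u @ v" by blast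
    then show "\<exists>a c u v. a \<noteq> c \<and> single_run a u \<and> single_run c v \<and> map Ch x = u @ v"
      by (intro exI[of _ "Ch a"] exI[of _ "Ch c"] exI[of _ "map Ch u"] exI[of _ "map Ch v"])
         (simp add: single_run_Ch2)
  qed
  show ?thesis using 1 2 by simp
qed

lemma set_nest: "set (nest ts) \<subseteq> (\<Union>t\<in>set ts. set (fst t))"
  by (induction ts rule: nest.induct) (auto dest: in_set_takeD in_set_dropD)



theorem theorem6p9:
  fixes \<sigma> :: "nat \<Rightarrow> 'a list" and p :: "nat \<Rightarrow> nat" and k :: nat
    and T :: "('a sym list \<times> nat) list"
  assumes k2: "k \<ge> 2"
    and nonempty: "\<forall>d. 1 \<le> d \<and> d \<le> k - 1 \<longrightarrow> \<sigma> d \<noteq> []"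
    and T_def: "T = ([At, Dollar], 1) # map (\<lambda>d. (map Ch (\<sigma> d), p d)) [1..<k]"
  defines "C1 \<equiv> (\<forall>d. 1 \<le> d \<and> d \<le> k - 2 \<longrightarrow>
              p d \<ge> 1 \<and> length (\<sigma> d) - p d \<ge> 1 \<and>
              single_run (hd (\<sigma> d)) (take (p d) (\<sigma> d)) \<and>
              single_run (last (\<sigma> d)) (drop (p d) (\<sigma> d)))"
    and "C2 \<equiv> p (k - 1) = 0 \<and>
              ((\<exists>a. single_run a (\<sigma> (k - 1))) \<or>
               (\<exists>a c x y. a \<noteq> c \<and> single_run a x \<and> single_run c y \<and> \<sigma> (k - 1) = x @ y))"
    and "C3 \<equiv> (k \<ge> 3 \<longrightarrow>
              (\<forall>d. 1 \<le> d \<and> d \<le> k - 3 \<longrightarrow>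
                  hd (\<sigma> (d + 1)) \<noteq> hd (\<sigma> d) \<and> last (\<sigma> (d + 1)) \<noteq> last (\<sigma> d)) \<and>
              hd (\<sigma> (k - 1)) \<noteq> hd (\<sigma> (k - 2)) \<and> last (\<sigma> (k - 1)) \<noteq> last (\<sigma> (k - 2)))"
  shows "((\<exists>s. T = Flashback s) \<longleftrightarrow> C1 \<and> C2 \<and> C3) \<and>
         (C1 \<and> C2 \<and> C3 \<longrightarrow> (\<exists>s. Flashback_inv T = map Ch s \<and> Flashback s = T))"
proof -
  note C1d = assms(4) and C2d = assms(5) and C3d = assms(6)
  define g where "g = (\<lambda>d. (map Ch (\<sigma> d), p d))"
  define ts where "ts = map g [1..<k]"
  have T: "T = ([At, Dollar], 1) # ts" using T_def unfolding ts_def g_def by simp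
  have len: "length ts = k - 1" unfolding ts_def by simp
  have nth: "\<And>i. i < k - 1 \<Longrightarrow> ts ! i = g (Suc i)" unfolding ts_def by (simp add: add.commute)
  have ne: "ts \<noteq> []" using len k2 by auto
  have kk: "Suc (k - 2) = k - 1" "k - 2 < k - 1" using k2 by auto
  have lst: "last ts = g (k - 1)" using ne len nth[OF kk(2)] kk(1) by (simp add: last_conv_nth numeral_2_eq_2)
  have links: "(\<forall>i. Suc i < length ts \<longrightarrow> step (ts ! i) (ts ! Suc i)) \<longleftrightarrow>
     (\<forall>d. 1 \<le> d \<and> d \<le> k - 2 \<longrightarrow>
        (p d \<ge> 1 \<and> length (\<sigma> d) - p d \<ge> 1 \<and> single_run (hd (\<sigma> d)) (take (p d) (\<sigma> d)) \<and>
         single_run (last (\<sigma> d)) (drop (p d) (\<sigma> d))) \<and>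
        hd (\<sigma> (d + 1)) \<noteq> hd (\<sigma> d) \<and> last (\<sigma> (d + 1)) \<noteq> last (\<sigma> d))"
  proof
    assume H: "\<forall>i. Suc i < length ts \<longrightarrow> step (ts ! i) (ts ! Suc i)"
    show "\<forall>d. 1 \<le> d \<and> d \<le> k - 2 \<longrightarrow>
        (p d \<ge> 1 \<and> length (\<sigma> d) - p d \<ge> 1 \<and> single_run (hd (\<sigma> d)) (take (p d) (\<sigma> d)) \<and>
         single_run (last (\<sigma> d)) (drop (p d) (\<sigma> d))) \<and>
        hd (\<sigma> (d + 1)) \<noteq> hd (\<sigma> d) \<and> last (\<sigma> (d + 1)) \<noteq> last (\<sigma> d)"
    proof (intro allI impI)
      fix d assume d: "1 \<le> d \<and> d \<le> k - 2"
      then obtain i where i: "d = Suc i" by (cases d) auto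
      have "step (ts ! i) (ts ! Suc i)" using H len d i by auto
      moreover have "ts ! i = g d" "ts ! Suc i = g (d + 1)" using nth d i by auto
      moreover have "\<sigma> d \<noteq> []" "\<sigma> (d + 1) \<noteq> []" using nonempty d by auto
      ultimately show "(p d \<ge> 1 \<and> length (\<sigma> d) - p d \<ge> 1 \<and> single_run (hd (\<sigma> d)) (take (p d) (\<sigma> d)) \<and>
         single_run (last (\<sigma> d)) (drop (p d) (\<sigma> d))) \<and>
        hd (\<sigma> (d + 1)) \<noteq> hd (\<sigma> d) \<and> last (\<sigma> (d + 1)) \<noteq> last (\<sigma> d)"
        unfolding g_def using step_Ch[of "\<sigma> d" "\<sigma> (d + 1)" "p d" "p (d + 1)"] by (simp only:) blast
    qed
  next
    assume H: "\<forall>d. 1 \<le> d \<and> d \<le> k - 2 \<longrightarrow>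
        (p d \<ge> 1 \<and> length (\<sigma> d) - p d \<ge> 1 \<and> single_run (hd (\<sigma> d)) (take (p d) (\<sigma> d)) \<and>
         single_run (last (\<sigma> d)) (drop (p d) (\<sigma> d))) \<and>
        hd (\<sigma> (d + 1)) \<noteq> hd (\<sigma> d) \<and> last (\<sigma> (d + 1)) \<noteq> last (\<sigma> d)"
    show "\<forall>i. Suc i < length ts \<longrightarrow> step (ts ! i) (ts ! Suc i)"
    proof (intro allI impI)
      fix i assume i: "Suc i < length ts"
      define d where "d = Suc i"
      have d: "1 \<le> d \<and> d \<le> k - 2" using i len d_def by auto
      have "ts ! i = g d" "ts ! Suc i = g (d + 1)" using nth i len d_def by auto
      moreover have "\<sigma> d \<noteq> []" "\<sigma> (d + 1) \<noteq> []" using nonempty d by auto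
      ultimately show "step (ts ! i) (ts ! Suc i)"
        unfolding g_def using step_Ch[of "\<sigma> d" "\<sigma> (d + 1)" "p d" "p (d + 1)"] H d by (simp only:) blast
    qed
  qed
  have c13: "C1 \<and> C3 \<longleftrightarrow> (\<forall>d. 1 \<le> d \<and> d \<le> k - 2 \<longrightarrow>
        (p d \<ge> 1 \<and> length (\<sigma> d) - p d \<ge> 1 \<and> single_run (hd (\<sigma> d)) (take (p d) (\<sigma> d)) \<and>
         single_run (last (\<sigma> d)) (drop (p d) (\<sigma> d))) \<and>
        hd (\<sigma> (d + 1)) \<noteq> hd (\<sigma> d) \<and> last (\<sigma> (d + 1)) \<noteq> last (\<sigma> d))"
  proof -
    have "C3 \<longleftrightarrow> (\<forall>d. 1 \<le> d \<and> d \<le> k - 2 \<longrightarrow>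
        hd (\<sigma> (d + 1)) \<noteq> hd (\<sigma> d) \<and> last (\<sigma> (d + 1)) \<noteq> last (\<sigma> d))"
    proof (cases "k \<ge> 3")
      case True
      have e: "k - 2 + 1 = k - 1" using True by simp
      show ?thesis unfolding C3d
      proof
        assume H: "3 \<le> k \<longrightarrow>
          (\<forall>d. 1 \<le> d \<and> d \<le> k - 3 \<longrightarrow>
            hd (\<sigma> (d + 1)) \<noteq> hd (\<sigma> d) \<and> last (\<sigma> (d + 1)) \<noteq> last (\<sigma> d)) \<and>
          hd (\<sigma> (k - 1)) \<noteq> hd (\<sigma> (k - 2)) \<and> last (\<sigma> (k - 1)) \<noteq> last (\<sigma> (k - 2))"
        show "\<forall>d. 1 \<le> d \<and> d \<le> k - 2 \<longrightarrow>
          hd (\<sigma> (d + 1)) \<noteq> hd (\<sigma> d) \<and> last (\<sigma> (d + 1)) \<noteq> last (\<sigma> d)"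
        proof (intro allI impI)
          fix d assume d: "1 \<le> d \<and> d \<le> k - 2"
          show "hd (\<sigma> (d + 1)) \<noteq> hd (\<sigma> d) \<and> last (\<sigma> (d + 1)) \<noteq> last (\<sigma> d)"
          proof (cases "d = k - 2")
            case True then show ?thesis using H e \<open>3 \<le> k\<close> by simp
          next
            case False then show ?thesis using H d \<open>3 \<le> k\<close> by auto
          qed
        qed
      next
        assume H: "\<forall>d. 1 \<le> d \<and> d \<le> k - 2 \<longrightarrow>
          hd (\<sigma> (d + 1)) \<noteq> hd (\<sigma> d) \<and> last (\<sigma> (d + 1)) \<noteq> last (\<sigma> d)"
        have "hd (\<sigma> (k - 2 + 1)) \<noteq> hd (\<sigma> (k - 2)) \<and> last (\<sigma> (k - 2 + 1)) \<noteq> last (\<sigma> (k - 2))"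
          using H True by simp
        then show "3 \<le> k \<longrightarrow>
          (\<forall>d. 1 \<le> d \<and> d \<le> k - 3 \<longrightarrow>
            hd (\<sigma> (d + 1)) \<noteq> hd (\<sigma> d) \<and> last (\<sigma> (d + 1)) \<noteq> last (\<sigma> d)) \<and>
          hd (\<sigma> (k - 1)) \<noteq> hd (\<sigma> (k - 2)) \<and> last (\<sigma> (k - 1)) \<noteq> last (\<sigma> (k - 2))"
          using H e by auto
      qed
    next
      case False
      then show ?thesis unfolding C3d by auto
    qed
    then show ?thesis unfolding C1d by blast
  qed
  have c2: "last_ok (last ts) \<longleftrightarrow> C2"
    unfolding lst g_def C2d using last_ok_Ch[of "\<sigma> (k - 1)" "p (k - 1)"] nonempty k2 by simp
  have V: "valid ts \<longleftrightarrow> C1 \<and> C2 \<and> C3"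
    using valid_index[of ts] ne links c13 c2 by blast
  have fwd: "C1 \<and> C2 \<and> C3" if "T = Flashback s" for s
  proof -
    have "s \<noteq> []"
    proof
      assume "s = []"
      then have "T = [([At, Dollar], 0)]" using that Flashback_empty by simp
      then show False using T by simp
    qed
    then have "ts = flash (map Ch s)" using that T Flashback_nonempty[OF \<open>s \<noteq> []\<close>] by simp
    then have "valid ts" using valid_flash[of "map Ch s"] \<open>s \<noteq> []\<close> by simp
    then show ?thesis using V by simp
  qed
  have bwd: "\<exists>s. Flashback_inv T = map Ch s \<and> Flashback s = T" if "C1 \<and> C2 \<and> C3"
  proof -
    have v: "valid ts" using V that by simp
    note F = flash_nest[OF v]
    have "\<forall>y\<in>set (nest ts). \<exists>x. y = Ch x"
      using set_nest[of ts] unfolding ts_def g_def by auto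
    then have "\<exists>s. nest ts = map Ch s" by (simp only: ex_map_conv)
    then obtain s where s: "nest ts = map Ch s" by blast
    have sne: "s \<noteq> []" using s F by auto
    have "Flashback s = T" using Flashback_nonempty[OF sne] s F T by simp
    moreover have "Flashback_inv T = map Ch s"
    proof -
      obtain t rest where "ts = t # rest" using ne by (cases ts) auto
      then have "nest T = At # nest ts @ [Dollar]" using T by simp
      then show ?thesis unfolding Flashback_inv_def using s by simp
    qed
    ultimately show ?thesis by blast
  qed
  show ?thesis using fwd bwd by blast
qed


end
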